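(* Let $\mathbb{A}$ be a Boolean algebra and $(\mathbb{B},\mu)$ a metric Boolean algebra. Then on $\mathcal{H}(\mathbb{A},\mathbb{B})$ we have $d_{hom}=d_{hom}^{Bor}$, where for $\varphi,\psi\in\mathcal{H}(\mathbb{A},\mathbb{B})$ $d_{hom}(\varphi,\psi)=\sup\{\mu(\varphi(A)\triangle\psi(A))\colon A\in\mathbb{A}\}$ and $d_{hom}^{Bor}(\varphi,\psi)=\sup\{\widehat{\mu}(f_\varphi^{-1}[B]\triangle f_\psi^{-1}[B])\colon B\text{ a Borel subset of }St(\mathbb{A})\}$.
   Context: A metric Boolean algebra $(\mathbb{B},\mu)$ is a Boolean algebra with a strictly positive finitely additive probability measure $\mu$. $\mathcal{H}(\mathbb{A},\mathbb{B})$ is the set of homomorphisms $\mathbb{A}\to\mathbb{B}$. Algebras are identified with the clopen algebras of their Stone spaces $St(\cdot)$; $\widehat{\mu}$ is the unique Radon measure on $St(\mathbb{B})$ extending $\mu$; $f_\varphi\colon St(\mathbb{B})\to St(\mathbb{A})$ is the continuous map $f_\varphi(x)=\varphi^{-1}[x]$. *)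

theory Defs
  imports "HOL-Analysis.Analysis" "HOL-Probability.Probability"
begin

text \<open>Boolean algebras are identified with the clopen algebras of their Stone spaces.\<close>

definition clopens :: "'a topology \<Rightarrow> 'a set set" where
  "clopens X = {U. openin X U \<and> closedin X U}"

definition stone_space :: "'a topology \<Rightarrow> bool" where
  "stone_space X \<longleftrightarrow> compact_space X \<and> Hausdorff_space X \<and>
     (\<forall>U. openin X U \<longrightarrow> (\<forall>x\<in>U. \<exists>V\<in>clopens X. x \<in> V \<and> V \<subseteq> U))"

definition borel_of :: "'a topology \<Rightarrow> 'a measure" where
  "borel_of X = sigma (topspace X) (Collect (openin X))"

definition symdiff :: "'a set \<Rightarrow> 'a set \<Rightarrow> 'a set" where
  "symdiff A B = (A - B) \<union> (B - A)"

text \<open>Boolean homomorphisms Clop(X) -> Clop(Y), i.e. elements of H(A,B).\<close>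
definition ba_hom :: "'a topology \<Rightarrow> 'b topology \<Rightarrow> ('a set \<Rightarrow> 'b set) \<Rightarrow> bool" where
  "ba_hom X Y \<phi> \<longleftrightarrow>
     (\<forall>U\<in>clopens X. \<phi> U \<in> clopens Y) \<and>
     (\<forall>U\<in>clopens X. \<forall>V\<in>clopens X. \<phi> (U \<union> V) = \<phi> U \<union> \<phi> V) \<and>
     (\<forall>U\<in>clopens X. \<phi> (topspace X - U) = topspace Y - \<phi> U)"

definition metric_ba_measure :: "'b topology \<Rightarrow> ('b set \<Rightarrow> real) \<Rightarrow> bool" where
  "metric_ba_measure Y \<mu> \<longleftrightarrow>
     \<mu> (topspace Y) = 1 \<and>
     (\<forall>U\<in>clopens Y. U \<noteq> {} \<longrightarrow> \<mu> U > 0) \<and>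
     (\<forall>U\<in>clopens Y. \<forall>V\<in>clopens Y. U \<inter> V = {} \<longrightarrow> \<mu> (U \<union> V) = \<mu> U + \<mu> V)"

definition radon_extension :: "'b topology \<Rightarrow> ('b set \<Rightarrow> real) \<Rightarrow> 'b measure \<Rightarrow> bool" where
  "radon_extension Y \<mu> M \<longleftrightarrow>
     sets M = sets (borel_of Y) \<and> finite_measure M \<and>
     (\<forall>E\<in>sets M. measure M E = (SUP K\<in>{K. compactin Y K \<and> K \<subseteq> E}. measure M K)) \<and>
     (\<forall>U\<in>clopens Y. measure M U = \<mu> U)"

text \<open>The dual map f_phi : St(B) -> St(A), f_phi(y) = phi^{-1}[y].\<close>
definition stone_map :: "'a topology \<Rightarrow> 'b topology \<Rightarrow> ('a set \<Rightarrow> 'b set) \<Rightarrow> 'b \<Rightarrow> 'a" where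
  "stone_map X Y \<phi> y = (THE x. x \<in> topspace X \<and> (\<forall>U\<in>clopens X. x \<in> U \<longleftrightarrow> y \<in> \<phi> U))"

definition d_hom :: "'a topology \<Rightarrow> ('b set \<Rightarrow> real) \<Rightarrow> ('a set \<Rightarrow> 'b set) \<Rightarrow> ('a set \<Rightarrow> 'b set) \<Rightarrow> real" where
  "d_hom X \<mu> \<phi> \<psi> = (SUP A\<in>clopens X. \<mu> (symdiff (\<phi> A) (\<psi> A)))"

definition d_hom_Bor :: "'a topology \<Rightarrow> 'b topology \<Rightarrow> 'b measure \<Rightarrow> ('a set \<Rightarrow> 'b set) \<Rightarrow> ('a set \<Rightarrow> 'b set) \<Rightarrow> real" where
  "d_hom_Bor X Y M \<phi> \<psi> = (SUP B\<in>sets (borel_of X).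
      measure M (symdiff {y\<in>topspace Y. stone_map X Y \<phi> y \<in> B} {y\<in>topspace Y. stone_map X Y \<psi> y \<in> B}))"

end

theory Submission
  imports Defs
begin

lemma clopens_iff: "U \<in> clopens X \<longleftrightarrow> openin X U \<and> closedin X U"
  by (simp add: clopens_def)

lemma clopen_sub: "U \<in> clopens X \<Longrightarrow> U \<subseteq> topspace X"
  by (simp add: clopens_def openin_subset)

lemma clopen_Un: "U \<in> clopens X \<Longrightarrow> V \<in> clopens X \<Longrightarrow> U \<union> V \<in> clopens X"
  by (auto simp: clopens_def)

lemma clopen_Int: "U \<in> clopens X \<Longrightarrow> V \<in> clopens X \<Longrightarrow> U \<inter> V \<in> clopens X"
  by (auto simp: clopens_def)

lemma clopen_compl: "U \<in> clopens X \<Longrightarrow> topspace X - U \<in> clopens X"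
  by (auto simp: clopens_def)

lemma clopen_Diff: "U \<in> clopens X \<Longrightarrow> V \<in> clopens X \<Longrightarrow> U - V \<in> clopens X"
  by (auto simp: clopens_def)

lemma clopen_empty: "{} \<in> clopens X" and clopen_top: "topspace X \<in> clopens X"
  by (auto simp: clopens_def)

lemma clopen_symdiff: "U \<in> clopens X \<Longrightarrow> V \<in> clopens X \<Longrightarrow> symdiff U V \<in> clopens X"
  by (simp add: symdiff_def clopen_Un clopen_Diff)

lemma clopen_finite_Union: "finite F \<Longrightarrow> F \<subseteq> clopens X \<Longrightarrow> \<Union>F \<in> clopens X"
  by (induction F rule: finite_induct) (auto simp: clopen_empty clopen_Un)

lemma ba_hom_sub:
  assumes "ba_hom X Y \<phi>" "U \<in> clopens X" shows "\<phi> U \<subseteq> topspace Y"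
  using assms clopen_sub unfolding ba_hom_def by blast

lemma ba_hom_top:
  assumes "ba_hom X Y \<phi>" shows "\<phi> (topspace X) = topspace Y"
proof -
  have "\<phi> (topspace X) = \<phi> (topspace X \<union> (topspace X - topspace X))" by simp
  also have "\<dots> = \<phi> (topspace X) \<union> \<phi> (topspace X - topspace X)"
    using assms clopen_top clopen_compl unfolding ba_hom_def by blast
  also have "\<dots> = \<phi> (topspace X) \<union> (topspace Y - \<phi> (topspace X))"
    using assms clopen_top unfolding ba_hom_def by metis
  also have "\<dots> = topspace Y" using ba_hom_sub[OF assms clopen_top] by blast
  finally show ?thesis .
qed

lemma ba_hom_empty:
  assumes "ba_hom X Y \<phi>" shows "\<phi> {} = {}"
proof -
  have "\<phi> {} = \<phi> (topspace X - topspace X)" by simp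
  also have "\<dots> = topspace Y - \<phi> (topspace X)"
    using assms clopen_top unfolding ba_hom_def by blast
  finally show ?thesis using ba_hom_top[OF assms] by simp
qed

lemma ba_hom_compl:
  assumes "ba_hom X Y \<phi>" "U \<in> clopens X" shows "\<phi> (topspace X - U) = topspace Y - \<phi> U"
  using assms unfolding ba_hom_def by blast

lemma ba_hom_Int:
  assumes h: "ba_hom X Y \<phi>" and U: "U \<in> clopens X" and V: "V \<in> clopens X"
  shows "\<phi> (U \<inter> V) = \<phi> U \<inter> \<phi> V"
proof -
  have e: "U \<inter> V = topspace X - ((topspace X - U) \<union> (topspace X - V))"
    using clopen_sub[OF U] clopen_sub[OF V] by blast
  have "\<phi> (U \<inter> V) = topspace Y - \<phi> ((topspace X - U) \<union> (topspace X - V))"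
    unfolding e by (rule ba_hom_compl[OF h clopen_Un[OF clopen_compl[OF U] clopen_compl[OF V]]])
  also have "\<dots> = topspace Y - (\<phi> (topspace X - U) \<union> \<phi> (topspace X - V))"
    using h clopen_compl[OF U] clopen_compl[OF V] unfolding ba_hom_def by metis
  also have "\<dots> = \<phi> U \<inter> \<phi> V"
    using ba_hom_compl[OF h U] ba_hom_compl[OF h V] ba_hom_sub[OF h U] ba_hom_sub[OF h V] by blast
  finally show ?thesis .
qed

lemma stone_map_exists:
  assumes S: "stone_space X" and h: "ba_hom X Y \<phi>" and y: "y \<in> topspace Y"
  shows "\<exists>!x. x \<in> topspace X \<and> (\<forall>U\<in>clopens X. x \<in> U \<longleftrightarrow> y \<in> \<phi> U)"
proof -
  define \<U> where "\<U> = {U \<in> clopens X. y \<in> \<phi> U}"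
  have top: "topspace X \<in> \<U>" using y ba_hom_top[OF h] clopen_top unfolding \<U>_def by auto
  have fin: "topspace X \<inter> \<Inter>F \<in> clopens X \<and> y \<in> \<phi> (topspace X \<inter> \<Inter>F)"
    if "finite F" "F \<subseteq> \<U>" for F
    using that
  proof (induction F rule: finite_induct)
    case empty
    then show ?case using top \<U>_def by simp
  next
    case (insert U F)
    then have U: "U \<in> clopens X" "y \<in> \<phi> U" and IH: "topspace X \<inter> \<Inter>F \<in> clopens X" "y \<in> \<phi> (topspace X \<inter> \<Inter>F)"
      unfolding \<U>_def by auto
    have e: "topspace X \<inter> \<Inter>(insert U F) = U \<inter> (topspace X \<inter> \<Inter>F)" by auto
    show ?case unfolding e using ba_hom_Int[OF h U(1) IH(1)] clopen_Int[OF U(1) IH(1)] U IH by auto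
  qed
  have "\<Inter>\<U> \<noteq> {}"
  proof -
    have cs: "compact_space X" using S unfolding stone_space_def by blast
    have "\<forall>C\<in>\<U>. closedin X C" unfolding \<U>_def clopens_def by blast
    moreover have "\<Inter>F \<noteq> {}" if "finite F" "F \<subseteq> \<U>" for F
    proof
      assume "\<Inter>F = {}"
      then have "topspace X \<inter> \<Inter>F = {}" by simp
      then show False using fin[OF that] ba_hom_empty[OF h] by simp
    qed
    ultimately show ?thesis using cs[unfolded compact_space_fip, rule_format, of \<U>] by blast
  qed
  then obtain x where x: "x \<in> \<Inter>\<U>" by blast
  have xt: "x \<in> topspace X" using x top by blast
  have xp: "\<forall>U\<in>clopens X. x \<in> U \<longleftrightarrow> y \<in> \<phi> U"
  proof
    fix U assume U: "U \<in> clopens X"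
    show "x \<in> U \<longleftrightarrow> y \<in> \<phi> U"
    proof
      assume "x \<in> U"
      show "y \<in> \<phi> U"
      proof (rule ccontr)
        assume "y \<notin> \<phi> U"
        then have "y \<in> \<phi> (topspace X - U)" using ba_hom_compl[OF h U] y by blast
        then have "topspace X - U \<in> \<U>" using clopen_compl[OF U] unfolding \<U>_def by blast
        then show False using x \<open>x \<in> U\<close> by blast
      qed
    next
      assume "y \<in> \<phi> U" then show "x \<in> U" using x U unfolding \<U>_def by blast
    qed
  qed
  have uniq: "x' = x" if x't: "x' \<in> topspace X" and x'p: "\<forall>U\<in>clopens X. x' \<in> U \<longleftrightarrow> y \<in> \<phi> U" for x'
  proof (rule ccontr)
    assume ne: "x' \<noteq> x"
    have H: "Hausdorff_space X" using S unfolding stone_space_def by blast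
    obtain V W where VW: "openin X V" "openin X W" "x \<in> V" "x' \<in> W" "disjnt V W"
      using H xt x't ne unfolding Hausdorff_space_def by metis
    obtain C where C: "C \<in> clopens X" "x \<in> C" "C \<subseteq> V"
      using S VW unfolding stone_space_def by metis
    have "x' \<notin> C" using C VW by (auto simp: disjnt_def)
    then show False using C xp x'p by blast
  qed
  show ?thesis
  proof (rule ex1I[of _ x])
    show "x \<in> topspace X \<and> (\<forall>U\<in>clopens X. x \<in> U \<longleftrightarrow> y \<in> \<phi> U)" using xt xp by blast
  next
    fix x' assume "x' \<in> topspace X \<and> (\<forall>U\<in>clopens X. x' \<in> U \<longleftrightarrow> y \<in> \<phi> U)"
    then show "x' = x" using uniq by blast
  qed
qed

lemma stone_map_prop:
  assumes "stone_space X" "ba_hom X Y \<phi>" "y \<in> topspace Y"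
  shows "stone_map X Y \<phi> y \<in> topspace X"
    and "\<And>U. U \<in> clopens X \<Longrightarrow> stone_map X Y \<phi> y \<in> U \<longleftrightarrow> y \<in> \<phi> U"
  using theI'[OF stone_map_exists[OF assms]] unfolding stone_map_def by blast+

lemma space_borel_of: "space (borel_of X) = topspace X"
  unfolding borel_of_def by (simp add: space_measure_of_conv)

lemma openin_borel: "openin X U \<Longrightarrow> U \<in> sets (borel_of X)"
  unfolding borel_of_def by (rule in_measure_of) (auto dest: openin_subset)

lemma closedin_borel: assumes "closedin X C" shows "C \<in> sets (borel_of X)"
proof -
  have "topspace X - (topspace X - C) \<in> sets (borel_of X)"
    using sets.compl_sets[OF openin_borel[of X "topspace X - C"]] assms
    by (simp add: space_borel_of openin_diff)
  then show ?thesis using closedin_subset[OF assms] by (simp add: double_diff)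
qed

lemma borel_sub: "B \<in> sets (borel_of X) \<Longrightarrow> B \<subseteq> topspace X"
  using sets.sets_into_space space_borel_of by metis

lemma continuous_measurable:
  assumes "continuous_map Y X f" shows "f \<in> measurable (borel_of Y) (borel_of X)"
  unfolding borel_of_def[of X]
proof (rule measurable_measure_of)
  show "Collect (openin X) \<subseteq> Pow (topspace X)" by (auto dest: openin_subset)
  show "f \<in> space (borel_of Y) \<rightarrow> topspace X"
    using assms by (simp add: space_borel_of continuous_map_def)
  fix U assume "U \<in> Collect (openin X)"
  then have "openin Y {y \<in> topspace Y. f y \<in> U}" using assms by (simp add: continuous_map_def)
  moreover have "f -` U \<inter> space (borel_of Y) = {y \<in> topspace Y. f y \<in> U}"
    by (auto simp: space_borel_of)
  ultimately show "f -` U \<inter> space (borel_of Y) \<in> sets (borel_of Y)"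
    using openin_borel by metis
qed

lemma stone_cont:
  assumes S: "stone_space X" and h: "ba_hom X Y \<phi>"
  shows "continuous_map Y X (stone_map X Y \<phi>)"
  unfolding continuous_map_def
proof (intro conjI allI impI)
  show "stone_map X Y \<phi> \<in> topspace Y \<rightarrow> topspace X"
    using stone_map_prop(1)[OF S h] by blast
  fix U assume U: "openin X U"
  have "{y \<in> topspace Y. stone_map X Y \<phi> y \<in> U} = \<Union>(\<phi> ` {W \<in> clopens X. W \<subseteq> U})"
  proof
    show "{y \<in> topspace Y. stone_map X Y \<phi> y \<in> U} \<subseteq> \<Union>(\<phi> ` {W \<in> clopens X. W \<subseteq> U})"
    proof
      fix y assume y: "y \<in> {y \<in> topspace Y. stone_map X Y \<phi> y \<in> U}"
      then obtain W where W: "W \<in> clopens X" "stone_map X Y \<phi> y \<in> W" "W \<subseteq> U"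
        using S U unfolding stone_space_def by blast
      then have "y \<in> \<phi> W" using stone_map_prop(2)[OF S h] y by blast
      then show "y \<in> \<Union>(\<phi> ` {W \<in> clopens X. W \<subseteq> U})" using W by blast
    qed
  next
    show "\<Union>(\<phi> ` {W \<in> clopens X. W \<subseteq> U}) \<subseteq> {y \<in> topspace Y. stone_map X Y \<phi> y \<in> U}"
    proof
      fix y assume "y \<in> \<Union>(\<phi> ` {W \<in> clopens X. W \<subseteq> U})"
      then obtain W where W: "W \<in> clopens X" "W \<subseteq> U" "y \<in> \<phi> W" by blast
      then have y: "y \<in> topspace Y" using ba_hom_sub[OF h] by blast
      then show "y \<in> {y \<in> topspace Y. stone_map X Y \<phi> y \<in> U}"
        using stone_map_prop(2)[OF S h y W(1)] W by blast
    qed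
  qed
  moreover have "openin Y (\<Union>(\<phi> ` {W \<in> clopens X. W \<subseteq> U}))"
  proof (rule openin_Union)
    fix S assume "S \<in> \<phi> ` {W \<in> clopens X. W \<subseteq> U}"
    then obtain W where W: "W \<in> clopens X" "S = \<phi> W" by blast
    have "\<phi> W \<in> clopens Y" using h W(1) unfolding ba_hom_def by blast
    then show "openin Y S" using W(2) by (simp add: clopens_def)
  qed
  ultimately show "openin Y {y \<in> topspace Y. stone_map X Y \<phi> y \<in> U}" by simp
qed

lemma stone_separate:
  assumes S: "stone_space X" and K1: "compactin X K1" and K2: "compactin X K2"
    and d: "K1 \<inter> K2 = {}"
  shows "\<exists>A\<in>clopens X. K1 \<subseteq> A \<and> A \<inter> K2 = {}"
proof -
  have H: "Hausdorff_space X" using S unfolding stone_space_def by blast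
  have step1: "\<exists>C\<in>clopens X. x \<in> C \<and> C \<inter> K2 = {}" if x: "x \<in> topspace X" "x \<notin> K2" for x
  proof -
    define \<W> where "\<W> = {W \<in> clopens X. x \<notin> W}"
    have "K2 \<subseteq> \<Union>\<W>"
    proof
      fix z assume z: "z \<in> K2"
      then have zt: "z \<in> topspace X" using K2 compactin_subset_topspace by blast
      have "z \<noteq> x" using z x by blast
      then obtain V W where VW: "openin X V" "openin X W" "z \<in> V" "x \<in> W" "disjnt V W"
        using H zt x(1) unfolding Hausdorff_space_def by metis
      obtain C where C: "C \<in> clopens X" "z \<in> C" "C \<subseteq> V"
        using S VW unfolding stone_space_def by metis
      have "x \<notin> C" using C VW by (auto simp: disjnt_def)
      then show "z \<in> \<Union>\<W>" using C unfolding \<W>_def by blast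
    qed
    moreover have "\<forall>W\<in>\<W>. openin X W" unfolding \<W>_def clopens_def by blast
    ultimately have "\<exists>F. finite F \<and> F \<subseteq> \<W> \<and> K2 \<subseteq> \<Union>F"
      using K2[unfolded compactin_def] by (elim conjE allE[of _ \<W>]) blast
    then obtain F where F: "finite F" "F \<subseteq> \<W>" "K2 \<subseteq> \<Union>F" by blast
    have "\<Union>F \<in> clopens X" using F clopen_finite_Union unfolding \<W>_def by blast
    then have "topspace X - \<Union>F \<in> clopens X" by (rule clopen_compl)
    moreover have "x \<notin> \<Union>F" using F unfolding \<W>_def by blast
    ultimately show ?thesis using F x by (intro bexI[of _ "topspace X - \<Union>F"]) auto
  qed
  define \<C> where "\<C> = {C \<in> clopens X. C \<inter> K2 = {}}"
  have "K1 \<subseteq> \<Union>\<C>"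
  proof
    fix x assume x: "x \<in> K1"
    then have "x \<in> topspace X" "x \<notin> K2" using K1 compactin_subset_topspace d by blast+
    then show "x \<in> \<Union>\<C>" using step1 unfolding \<C>_def by blast
  qed
  moreover have "\<forall>W\<in>\<C>. openin X W" unfolding \<C>_def clopens_def by blast
  ultimately have "\<exists>F. finite F \<and> F \<subseteq> \<C> \<and> K1 \<subseteq> \<Union>F"
    using K1[unfolded compactin_def] by (elim conjE allE[of _ \<C>]) blast
  then obtain F where F: "finite F" "F \<subseteq> \<C>" "K1 \<subseteq> \<Union>F" by blast
  have "\<Union>F \<in> clopens X" using F clopen_finite_Union unfolding \<C>_def by blast
  moreover have "\<Union>F \<inter> K2 = {}" using F unfolding \<C>_def by blast
  ultimately show ?thesis using F by blast
qed

lemma inner_approx: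
  assumes R: "radon_extension Y \<mu> M" and E: "E \<in> sets M" and e: "e > 0"
  shows "\<exists>K. compactin Y K \<and> K \<subseteq> E \<and> measure M E < measure M K + e"
proof -
  have fm: "finite_measure M" using R unfolding radon_extension_def by blast
  have eq: "measure M E = (SUP K\<in>{K. compactin Y K \<and> K \<subseteq> E}. measure M K)"
    using R E unfolding radon_extension_def by blast
  have ne: "{K. compactin Y K \<and> K \<subseteq> E} \<noteq> {}" by blast
  have bdd: "bdd_above ((\<lambda>K. measure M K) ` {K. compactin Y K \<and> K \<subseteq> E})"
    using finite_measure.bounded_measure[OF fm] by (intro bdd_aboveI) blast
  have "measure M E - e < measure M E" using e by simp
  then obtain K where "K \<in> {K. compactin Y K \<and> K \<subseteq> E}" "measure M E - e < measure M K"
    using less_cSUP_iff[OF ne bdd] eq by metis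
  then show ?thesis by (intro exI[of _ K]) auto
qed

theorem lemma4p6:
  fixes X :: "'a topology" and Y :: "'b topology"
    and \<mu> :: "'b set \<Rightarrow> real" and M :: "'b measure"
    and \<phi> \<psi> :: "'a set \<Rightarrow> 'b set"
  assumes "stone_space X" and "stone_space Y"
    and "metric_ba_measure Y \<mu>"
    and "radon_extension Y \<mu> M"
    and "ba_hom X Y \<phi>" and "ba_hom X Y \<psi>"
  shows "d_hom X \<mu> \<phi> \<psi> = d_hom_Bor X Y M \<phi> \<psi>"
proof -
  note S = assms(1) and SY = assms(2) and R = assms(4) and h1 = assms(5) and h2 = assms(6)
  have fm: "finite_measure M" and sM: "sets M = sets (borel_of Y)"
    and mu: "\<And>U. U \<in> clopens Y \<Longrightarrow> measure M U = \<mu> U"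
    using R unfolding radon_extension_def by auto
  have HY: "Hausdorff_space Y" using SY unfolding stone_space_def by blast
  have spM: "space M = topspace Y"
    using sets_eq_imp_space_eq[OF sM] space_borel_of by metis
  define f where "f = stone_map X Y \<phi>"
  define g where "g = stone_map X Y \<psi>"
  have cf: "continuous_map Y X f" and cg: "continuous_map Y X g"
    unfolding f_def g_def using stone_cont[OF S h1] stone_cont[OF S h2] .
  have pre_meas: "{y \<in> topspace Y. k y \<in> B} \<in> sets M"
    if "continuous_map Y X k" "B \<in> sets (borel_of X)" for k B
  proof -
    have "k -` B \<inter> space (borel_of Y) \<in> sets (borel_of Y)"
      using measurable_sets[OF continuous_measurable[OF that(1)] that(2)] .
    moreover have "k -` B \<inter> space (borel_of Y) = {y \<in> topspace Y. k y \<in> B}"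
      by (auto simp: space_borel_of)
    ultimately show ?thesis using sM by simp
  qed
  have pre_f: "{y \<in> topspace Y. f y \<in> A} = \<phi> A" if "A \<in> clopens X" for A
    using stone_map_prop(2)[OF S h1 _ that] ba_hom_sub[OF h1 that] unfolding f_def by blast
  have pre_g: "{y \<in> topspace Y. g y \<in> A} = \<psi> A" if "A \<in> clopens X" for A
    using stone_map_prop(2)[OF S h2 _ that] ba_hom_sub[OF h2 that] unfolding g_def by blast
  have bnd: "measure M E \<le> measure M (space M)" for E
    using finite_measure.bounded_measure[OF fm] .
  define G where "G = (\<lambda>B. measure M (symdiff {y\<in>topspace Y. f y \<in> B} {y\<in>topspace Y. g y \<in> B}))"
  have Bor: "d_hom_Bor X Y M \<phi> \<psi> = (SUP B\<in>sets (borel_of X). G B)"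
    unfolding d_hom_Bor_def G_def f_def g_def ..
  define F where "F = (\<lambda>A. \<mu> (symdiff (\<phi> A) (\<psi> A)))"
  have Hom: "d_hom X \<mu> \<phi> \<psi> = (SUP A\<in>clopens X. F A)"
    unfolding d_hom_def F_def ..
  have FG: "F A = G A" if A: "A \<in> clopens X" for A
  proof -
    have "symdiff (\<phi> A) (\<psi> A) \<in> clopens Y"
      using h1 h2 A clopen_symdiff unfolding ba_hom_def by blast
    then show ?thesis unfolding F_def G_def pre_f[OF A] pre_g[OF A] using mu by simp
  qed
  have bddG: "bdd_above (G ` sets (borel_of X))"
  proof (rule bdd_aboveI[where M="measure M (space M)"])
    fix x assume "x \<in> G ` sets (borel_of X)"
    then obtain B where "x = G B" by blast
    then show "x \<le> measure M (space M)" unfolding G_def using bnd by simp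
  qed
  have bddF: "bdd_above (F ` clopens X)"
  proof (rule bdd_aboveI[where M="measure M (space M)"])
    fix x assume "x \<in> F ` clopens X"
    then obtain A where "A \<in> clopens X" "x = F A" by blast
    then show "x \<le> measure M (space M)" using FG unfolding G_def using bnd by simp
  qed
  have clo_bor: "A \<in> sets (borel_of X)" if "A \<in> clopens X" for A
    using that openin_borel unfolding clopens_def by blast
  have le1: "(SUP A\<in>clopens X. F A) \<le> (SUP B\<in>sets (borel_of X). G B)"
  proof (rule cSUP_least)
    show "clopens X \<noteq> {}" using clopen_empty by blast
    fix A assume A: "A \<in> clopens X"
    show "F A \<le> (SUP B\<in>sets (borel_of X). G B)"
      unfolding FG[OF A] by (rule cSUP_upper[OF clo_bor[OF A] bddG])
  qed
  have le2: "(SUP B\<in>sets (borel_of X). G B) \<le> (SUP A\<in>clopens X. F A)"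
  proof (rule cSUP_least)
    show "sets (borel_of X) \<noteq> {}" by blast
    fix B assume B: "B \<in> sets (borel_of X)"
    define Pf where "Pf = {y\<in>topspace Y. f y \<in> B}"
    define Pg where "Pg = {y\<in>topspace Y. g y \<in> B}"
    have Pfm: "Pf \<in> sets M" and Pgm: "Pg \<in> sets M"
      unfolding Pf_def Pg_def using pre_meas[OF cf B] pre_meas[OF cg B] .
    define P where "P = Pf - Pg"
    define Q where "Q = Pg - Pf"
    have Pm: "P \<in> sets M" and Qm: "Q \<in> sets M" unfolding P_def Q_def using Pfm Pgm by auto
    have GB: "G B = measure M P + measure M Q"
    proof -
      have "G B = measure M (P \<union> Q)" unfolding G_def P_def Q_def Pf_def Pg_def symdiff_def ..
      also have "\<dots> = measure M P + measure M Q"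
        using finite_measure.finite_measure_Union[OF fm Pm Qm] unfolding P_def Q_def by blast
      finally show ?thesis .
    qed
    show "G B \<le> (SUP A\<in>clopens X. F A)"
    proof (rule field_le_epsilon)
      fix e :: real assume e: "e > 0"
      obtain K where K: "compactin Y K" "K \<subseteq> P" "measure M P < measure M K + e/2"
        using inner_approx[OF R Pm, of "e/2"] e by auto
      obtain L where L: "compactin Y L" "L \<subseteq> Q" "measure M Q < measure M L + e/2"
        using inner_approx[OF R Qm, of "e/2"] e by auto
      have Km: "K \<in> sets M"
        using closedin_borel[OF compactin_imp_closedin[OF HY K(1)]] sM by simp
      have Lm: "L \<in> sets M"
        using closedin_borel[OF compactin_imp_closedin[OF HY L(1)]] sM by simp
      have c1: "compactin X (f ` K \<union> g ` L)"
        by (intro compactin_Un image_compactin[OF K(1) cf] image_compactin[OF L(1) cg])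
      have c2: "compactin X (g ` K \<union> f ` L)"
        by (intro compactin_Un image_compactin[OF K(1) cg] image_compactin[OF L(1) cf])
      have dj: "(f ` K \<union> g ` L) \<inter> (g ` K \<union> f ` L) = {}"
      proof -
        have "f ` K \<union> g ` L \<subseteq> B" using K(2) L(2) unfolding P_def Q_def Pf_def Pg_def by blast
        moreover have "(g ` K \<union> f ` L) \<inter> B = {}"
          using K(2) L(2) unfolding P_def Q_def Pf_def Pg_def by blast
        ultimately show ?thesis by blast
      qed
      obtain A where A: "A \<in> clopens X" "f ` K \<union> g ` L \<subseteq> A" "A \<inter> (g ` K \<union> f ` L) = {}"
        using stone_separate[OF S c1 c2 dj] by blast
      have KLsub: "K \<subseteq> topspace Y" "L \<subseteq> topspace Y"
        using K(2) L(2) unfolding P_def Q_def Pf_def Pg_def by blast+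
      have "K \<subseteq> \<phi> A - \<psi> A"
      proof
        fix y assume y: "y \<in> K"
        have "f y \<in> A" "g y \<notin> A" using y A(2,3) by blast+
        then have "y \<in> {y \<in> topspace Y. f y \<in> A}" "y \<notin> {y \<in> topspace Y. g y \<in> A}"
          using y KLsub by auto
        then show "y \<in> \<phi> A - \<psi> A" unfolding pre_f[OF A(1)] pre_g[OF A(1)] by blast
      qed
      moreover have "L \<subseteq> \<psi> A - \<phi> A"
      proof
        fix y assume y: "y \<in> L"
        have "g y \<in> A" "f y \<notin> A" using y A(2,3) by blast+
        then have "y \<in> {y \<in> topspace Y. g y \<in> A}" "y \<notin> {y \<in> topspace Y. f y \<in> A}"
          using y KLsub by auto
        then show "y \<in> \<psi> A - \<phi> A" unfolding pre_f[OF A(1)] pre_g[OF A(1)] by blast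
      qed
      ultimately have KL: "K \<union> L \<subseteq> symdiff (\<phi> A) (\<psi> A)" unfolding symdiff_def by blast
      have Dc: "symdiff (\<phi> A) (\<psi> A) \<in> clopens Y"
        using h1 h2 A(1) clopen_symdiff unfolding ba_hom_def by blast
      have Dm: "symdiff (\<phi> A) (\<psi> A) \<in> sets M"
        using Dc openin_borel sM unfolding clopens_def by blast
      have KLdj: "K \<inter> L = {}" using K(2) L(2) unfolding P_def Q_def by blast
      have "measure M K + measure M L = measure M (K \<union> L)"
        using finite_measure.finite_measure_Union[OF fm Km Lm KLdj] by simp
      also have "\<dots> \<le> measure M (symdiff (\<phi> A) (\<psi> A))"
        by (rule finite_measure.finite_measure_mono[OF fm KL Dm])
      also have "\<dots> = F A" unfolding F_def using mu[OF Dc] .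
      also have "\<dots> \<le> (SUP A\<in>clopens X. F A)" by (rule cSUP_upper[OF A(1) bddF])
      finally have "measure M K + measure M L \<le> (SUP A\<in>clopens X. F A)" .
      then show "G B \<le> (SUP A\<in>clopens X. F A) + e" using GB K(3) L(3) by linarith
    qed
  qed
  show ?thesis unfolding Bor Hom using le1 le2 by linarith
qed

end
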